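(* Let $A_1,A_2,B_1,B_2,C_1\in\mathbb{C}^{r\times r}$ with $C_1+mI$ invertible for all $m\ge0$, $A_iB_1=B_1A_i$ ($i=1,2$) and $C_1B_2=B_2C_1$. Let $n\ge1$ and suppose $A_2+mI$ is invertible for all $m\ge0$. Then $$F_{13}[A_2+nI]=F_{13}+x_2\Big[\sum_{n_1=1}^nF_{13}[A_2+n_1I,B_2+I,C_1+I]\Big]B_2C_1^{-1}+x_3B_1\Big[\sum_{n_1=1}^nF_{13}[A_2+n_1I,B_1+I,C_1+I]\Big]C_1^{-1}.$$ Furthermore, if $A_2-n_1I$ is invertible for $0\le n_1\le n$, then $$F_{13}[A_2-nI]=F_{13}-x_2\Big[\sum_{n_1=0}^{n-1}F_{13}[A_2-n_1I,B_2+I,C_1+I]\Big]B_2C_1^{-1}-x_3B_1\Big[\sum_{n_1=0}^{n-1}F_{13}[A_2-n_1I,B_1+I,C_1+I]\Big]C_1^{-1}.$$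
   Context: For $M\in\mathbb{C}^{r\times r}$: $(M)_0=I$, $(M)_m=M(M+I)\cdots(M+(m-1)I)$, $(M)^{-1}_m=((M)_m)^{-1}$. The three-variable Lauricella matrix function $$F_{13}=F_{13}[A_1,A_2,B_1,B_2;C_1;x_1,x_2,x_3]=\sum_{m_1,m_2,m_3\ge0}(A_1)_{m_1}(A_2)_{m_2+m_3}(B_1)_{m_1+m_3}(B_2)_{m_2}(C_1)^{-1}_{m_1+m_2+m_3}\frac{x_1^{m_1}x_2^{m_2}x_3^{m_3}}{m_1!m_2!m_3!},$$ with scalar variables $x_i$ and matrix products in the written order; identities are of formal power series in the $x_i$. $F_{13}[\dots]$ lists only the shifted parameters, all others unchanged. *)

theory Defs
  imports "HOL-Analysis.Analysis"
begin

text \<open>r x r complex matrices are modelled as complex^'n^'n for a finite index type 'n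
(r = CARD('n)). A formal power series in x1,x2,x3 with matrix coefficients is
modelled by its coefficient function nat => nat => nat => matrix.\<close>

type_synonym 'n cmat = "complex^'n^'n"
type_synonym 'n fps3 = "nat \<Rightarrow> nat \<Rightarrow> nat \<Rightarrow> 'n cmat"

fun mpoch :: "'n::finite cmat \<Rightarrow> nat \<Rightarrow> 'n cmat" where
  "mpoch M 0 = mat 1"
| "mpoch M (Suc m) = mpoch M m ** (M + real m *\<^sub>R mat 1)"

definition F13 :: "'n::finite cmat \<Rightarrow> 'n cmat \<Rightarrow> 'n cmat \<Rightarrow> 'n cmat \<Rightarrow> 'n cmat \<Rightarrow> 'n fps3" where
  "F13 A1 A2 B1 B2 C1 = (\<lambda>m1 m2 m3.
     inverse (fact m1 * fact m2 * fact m3 :: real) *\<^sub>R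
       (mpoch A1 m1 ** mpoch A2 (m2 + m3) ** mpoch B1 (m1 + m3) ** mpoch B2 m2
        ** matrix_inv (mpoch C1 (m1 + m2 + m3))))"

definition mulx2 :: "'n::finite fps3 \<Rightarrow> 'n fps3" where
  "mulx2 S = (\<lambda>m1 m2 m3. if m2 = 0 then 0 else S m1 (m2 - 1) m3)"

definition mulx3 :: "'n::finite fps3 \<Rightarrow> 'n fps3" where
  "mulx3 S = (\<lambda>m1 m2 m3. if m3 = 0 then 0 else S m1 m2 (m3 - 1))"

definition lmul :: "'n::finite cmat \<Rightarrow> 'n fps3 \<Rightarrow> 'n fps3" where
  "lmul M S = (\<lambda>m1 m2 m3. M ** S m1 m2 m3)"

definition rmul :: "'n::finite fps3 \<Rightarrow> 'n cmat \<Rightarrow> 'n fps3" where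
  "rmul S M = (\<lambda>m1 m2 m3. S m1 m2 m3 ** M)"

definition sadd :: "'n::finite fps3 \<Rightarrow> 'n fps3 \<Rightarrow> 'n fps3" where
  "sadd S T = (\<lambda>m1 m2 m3. S m1 m2 m3 + T m1 m2 m3)"

definition ssub :: "'n::finite fps3 \<Rightarrow> 'n fps3 \<Rightarrow> 'n fps3" where
  "ssub S T = (\<lambda>m1 m2 m3. S m1 m2 m3 - T m1 m2 m3)"

end

theory Submission
  imports Defs
begin

lemma mm_rdistrib: "((B + C) ** (A::'n::finite cmat)) = (B ** A) + (C ** A)"
  by (vector matrix_matrix_mult_def sum.distrib[symmetric] field_simps)
lemma mm_rdiff: "((B - C) ** (A::'n::finite cmat)) = (B ** A) - (C ** A)"
  by (vector matrix_matrix_mult_def sum_subtractf[symmetric] field_simps)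
lemma mm_ldiff: "((A::'n::finite cmat) ** (B - C)) = (A ** B) - (A ** C)"
  by (vector matrix_matrix_mult_def sum_subtractf[symmetric] field_simps)
lemma mm_scaleR_left: "((r *\<^sub>R B) ** (A::'n::finite cmat)) = r *\<^sub>R (B ** A)"
  by (vector matrix_matrix_mult_def sum_distrib_left scaleR_conv_of_real field_simps)
lemma mm_scaleR_right: "((A::'n::finite cmat) ** (r *\<^sub>R B)) = r *\<^sub>R (A ** B)"
  by (vector matrix_matrix_mult_def sum_distrib_left scaleR_conv_of_real field_simps)
lemma mat1_comm: "(A::'n::finite cmat) ** mat 1 = mat 1 ** A" by simp

lemma comm_shift: assumes "(A::'n::finite cmat) ** B = B ** A"
  shows "A ** (B + r *\<^sub>R mat 1) = (B + r *\<^sub>R mat 1) ** A"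
  using assms by (simp add: matrix_add_ldistrib mm_rdistrib mm_scaleR_left mm_scaleR_right)

lemma comm_mpoch: assumes "(A::'n::finite cmat) ** B = B ** A"
  shows "A ** mpoch B k = mpoch B k ** A"
proof (induction k)
  case (Suc k)
  have "A ** mpoch B (Suc k) = (A ** mpoch B k) ** (B + real k *\<^sub>R mat 1)"
    by (simp add: matrix_mul_assoc)
  also have "\<dots> = mpoch B k ** (A ** (B + real k *\<^sub>R mat 1))"
    by (simp add: Suc matrix_mul_assoc)
  also have "\<dots> = mpoch B (Suc k) ** A"
    by (simp add: comm_shift[OF assms] matrix_mul_assoc)
  finally show ?case .
qed simp

lemma inv_props: assumes "invertible (X::'n::finite cmat)"
  shows "X ** matrix_inv X = mat 1 \<and> matrix_inv X ** X = mat 1"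
  using assms unfolding invertible_def matrix_inv_def by (rule someI_ex)

lemma comm_inv: assumes "(A::'n::finite cmat) ** X = X ** A" "invertible X"
  shows "A ** matrix_inv X = matrix_inv X ** A"
proof -
  have l: "matrix_inv X ** X = mat 1" and r: "X ** matrix_inv X = mat 1"
    using inv_props[OF assms(2)] by auto
  have "A ** matrix_inv X = matrix_inv X ** X ** A ** matrix_inv X" by (simp add: l)
  also have "\<dots> = matrix_inv X ** (A ** X) ** matrix_inv X" by (simp add: assms(1) matrix_mul_assoc)
  also have "\<dots> = matrix_inv X ** A" by (simp add: r flip: matrix_mul_assoc)
  finally show ?thesis .
qed

lemma inv_mult: assumes "invertible (X::'n::finite cmat)" "invertible (Y::'n cmat)"
  shows "matrix_inv (X ** Y) = matrix_inv Y ** matrix_inv X"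
proof -
  have l: "matrix_inv X ** X = mat 1" and r: "X ** matrix_inv X = mat 1"
    using inv_props[OF assms(1)] by auto
  have l2: "matrix_inv Y ** Y = mat 1" and r2: "Y ** matrix_inv Y = mat 1"
    using inv_props[OF assms(2)] by auto
  have i: "invertible (X ** Y)" using assms invertible_mult by blast
  have l3: "matrix_inv (X**Y) ** (X ** Y) = mat 1"
    using inv_props[OF i] by auto
  have e: "(X ** Y) ** (matrix_inv Y ** matrix_inv X) = mat 1"
  proof -
    have "(X ** Y) ** (matrix_inv Y ** matrix_inv X) = X ** (Y ** matrix_inv Y) ** matrix_inv X"
      by (simp only: matrix_mul_assoc)
    also have "\<dots> = mat 1" by (simp add: r r2)
    finally show ?thesis .
  qed
  have "matrix_inv (X ** Y) = matrix_inv (X**Y) ** ((X ** Y) ** (matrix_inv Y ** matrix_inv X))"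
    by (simp add: e)
  also have "\<dots> = matrix_inv (X**Y) ** (X ** Y) ** (matrix_inv Y ** matrix_inv X)"
    by (simp only: matrix_mul_assoc)
  also have "\<dots> = matrix_inv Y ** matrix_inv X" by (simp add: l3)
  finally show ?thesis .
qed

lemma mpoch_shift: "mpoch M (Suc k) = M ** mpoch (M + mat 1) k"
proof (induction k)
  case 0 show ?case by simp
next
  case (Suc k)
  have e: "M + mat 1 + real k *\<^sub>R mat 1 = M + real (Suc k) *\<^sub>R mat 1"
    by (simp add: algebra_simps)
  show ?case
    by (subst mpoch.simps(2), subst Suc, simp add: e matrix_mul_assoc)
qed

lemma mpoch_shift': "mpoch M (Suc k) = mpoch (M + mat 1) k ** M"
  using mpoch_shift[of M k] comm_mpoch[of M "M + mat 1" k]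
  by (simp add: matrix_add_ldistrib mm_rdistrib)

lemma mpoch_diff: "mpoch (M + mat 1) (Suc k) - mpoch M (Suc k) = real (Suc k) *\<^sub>R mpoch (M + mat 1) k"
proof (induction k)
  case 0 show ?case by simp
next
  case (Suc k)
  have e: "M + real (Suc k) *\<^sub>R mat 1 = (M + real k *\<^sub>R mat 1) + mat 1"
     "M + mat 1 + real (Suc k) *\<^sub>R mat 1 = (M + mat 1 + real k *\<^sub>R mat 1) + mat 1"
    by (simp_all add: algebra_simps)
  have "mpoch (M + mat 1) (Suc (Suc k)) - mpoch M (Suc (Suc k))
     = (mpoch (M + mat 1) (Suc k) - mpoch M (Suc k)) ** (M + real (Suc k) *\<^sub>R mat 1) + mpoch (M + mat 1) (Suc k)"
    by (simp only: mpoch.simps(2) e mm_rdiff matrix_add_ldistrib, simp add: algebra_simps)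
  also have "\<dots> = real (Suc k) *\<^sub>R mpoch (M + mat 1) (Suc k) + mpoch (M + mat 1) (Suc k)"
    unfolding Suc mm_scaleR_left
    by (simp add: algebra_simps)
  also have "\<dots> = real (Suc (Suc k)) *\<^sub>R mpoch (M + mat 1) (Suc k)"
    by (simp only: of_nat_Suc[of "Suc k"] scaleR_add_left scaleR_one add.commute)
  finally show ?case .
qed

lemma inv_mpoch: assumes "\<And>m::nat. invertible (C + real m *\<^sub>R mat 1)"
  shows "invertible (mpoch C k)"
proof (induction k)
  case 0 show ?case by (auto simp: invertible_def)
next
  case (Suc k) thus ?case by (simp add: invertible_mult assms)
qed

lemma regroup2:
  fixes X S' Ti B2 Ci :: "'n::finite cmat"
  assumes "B2 ** Ti = Ti ** B2"
  shows "X ** S' ** Ti ** (B2 ** Ci) = X ** (S' ** B2) ** (Ti ** Ci)"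
proof -
  have c: "B2 ** (Ti ** Z) = Ti ** (B2 ** Z)" for Z
    by (simp add: assms matrix_mul_assoc)
  show ?thesis by (simp add: c flip: matrix_mul_assoc)
qed

lemma regroup3:
  fixes P Q R' S Ti Ci B1 :: "'n::finite cmat"
  assumes "B1 ** P = P ** B1" "B1 ** Q = Q ** B1"
  shows "B1 ** (P ** Q ** R' ** S ** Ti ** Ci) = P ** Q ** (B1 ** R') ** S ** (Ti ** Ci)"
proof -
  have c: "B1 ** (P ** Z) = P ** (B1 ** Z)" "B1 ** (Q ** Z) = Q ** (B1 ** Z)" for Z
    by (simp_all add: assms matrix_mul_assoc)
  show ?thesis by (simp add: c flip: matrix_mul_assoc)
qed

lemma step:
  fixes A1 A2 B1 B2 C1 :: "'n::finite cmat"
  assumes hC: "\<And>m::nat. invertible (C1 + real m *\<^sub>R mat 1)"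
    and hA1B1: "A1 ** B1 = B1 ** A1"
    and hA2B1: "A2 ** B1 = B1 ** A2"
    and hC1B2: "C1 ** B2 = B2 ** C1"
  shows "F13 A1 (A2 + mat 1) B1 B2 C1 m1 m2 m3 = F13 A1 A2 B1 B2 C1 m1 m2 m3
     + mulx2 (rmul (F13 A1 (A2 + mat 1) B1 (B2 + mat 1) (C1 + mat 1)) (B2 ** matrix_inv C1)) m1 m2 m3
     + mulx3 (lmul B1 (rmul (F13 A1 (A2 + mat 1) (B1 + mat 1) B2 (C1 + mat 1)) (matrix_inv C1))) m1 m2 m3"
proof (cases "m2 + m3")
  case 0
  then show ?thesis by (simp add: F13_def mulx2_def mulx3_def)
next
  case (Suc j)
  define s where "s = inverse (fact m1 * fact m2 * fact m3 :: real)"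
  define P where "P = mpoch A1 m1"
  define Q where "Q = mpoch (A2 + mat 1) j"
  define R where "R = mpoch B1 (m1 + m3)"
  define S where "S = mpoch B2 m2"
  define T where "T = matrix_inv (mpoch C1 (m1 + m2 + m3))"
  define X where "X = P ** Q ** R ** S ** T"
  have hC': "invertible (C1 + mat 1 + real m *\<^sub>R mat 1)" for m
    using hC[of "Suc m"] by (simp add: algebra_simps)
  have iC: "invertible C1" using hC[of 0] by simp
  have lhs: "F13 A1 (A2 + mat 1) B1 B2 C1 m1 m2 m3 = F13 A1 A2 B1 B2 C1 m1 m2 m3 + (s * real (m2 + m3)) *\<^sub>R X"
  proof -
    have "mpoch (A2 + mat 1) (m2 + m3) = mpoch A2 (m2 + m3) + real (m2+m3) *\<^sub>R Q"
      using mpoch_diff[of A2 j] by (simp add: Suc Q_def algebra_simps)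
    then show ?thesis
      by (simp add: F13_def X_def P_def R_def S_def T_def s_def matrix_add_ldistrib mm_rdistrib
          mm_scaleR_left mm_scaleR_right scaleR_add_right)
  qed
  have t2: "mulx2 (rmul (F13 A1 (A2 + mat 1) B1 (B2 + mat 1) (C1 + mat 1)) (B2 ** matrix_inv C1)) m1 m2 m3
       = (s * real m2) *\<^sub>R X"
  proof (cases m2)
    case 0 then show ?thesis by (simp add: mulx2_def)
  next
    case (Suc a)
    have j: "j = a + m3" using Suc \<open>m2 + m3 = Suc j\<close> by simp
    have sc: "inverse (fact m1 * fact a * fact m3 :: real) = s * real m2"
    proof -
      have "fact (Suc a) = real (Suc a) * (fact a :: real)" by simp
      moreover have "(fact m1 :: real) \<noteq> 0" "(fact m3 :: real) \<noteq> 0" "(fact a :: real) \<noteq> 0" by auto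
      ultimately show ?thesis unfolding s_def Suc by (simp only:) (simp add: field_simps del: of_nat_Suc)
    qed
    define Ti where "Ti = matrix_inv (mpoch (C1 + mat 1) (m1 + a + m3))"
    have iT: "invertible (mpoch (C1 + mat 1) (m1 + a + m3))" by (rule inv_mpoch[OF hC'])
    have cB: "B2 ** (C1 + mat 1) = (C1 + mat 1) ** B2"
      using comm_shift[of B2 C1 1] hC1B2 by simp
    have cT: "B2 ** Ti = Ti ** B2"
      unfolding Ti_def by (rule comm_inv[OF comm_mpoch[OF cB] iT])
    have eS: "mpoch (B2 + mat 1) a ** B2 = S" unfolding S_def Suc by (rule mpoch_shift'[symmetric])
    have eT: "Ti ** matrix_inv C1 = T"
    proof -
      have "m1 + m2 + m3 = Suc (m1 + a + m3)" using Suc by simp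
      then show ?thesis unfolding T_def Ti_def by (simp only: mpoch_shift inv_mult[OF iC iT])
    qed
    have "mulx2 (rmul (F13 A1 (A2 + mat 1) B1 (B2 + mat 1) (C1 + mat 1)) (B2 ** matrix_inv C1)) m1 m2 m3
       = (inverse (fact m1 * fact a * fact m3 :: real) *\<^sub>R (P ** Q ** R ** mpoch (B2 + mat 1) a ** Ti)) ** (B2 ** matrix_inv C1)"
      by (simp add: mulx2_def rmul_def F13_def Suc j P_def Q_def R_def Ti_def del: mpoch.simps)
    also have "\<dots> = inverse (fact m1 * fact a * fact m3 :: real) *\<^sub>R (P ** Q ** R ** (mpoch (B2 + mat 1) a ** B2) ** (Ti ** matrix_inv C1))"
      by (simp only: mm_scaleR_left regroup2[OF cT])
    also have "\<dots> = (s * real m2) *\<^sub>R X" by (simp only: eS eT sc X_def)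
    finally show ?thesis .
  qed
  have t3: "mulx3 (lmul B1 (rmul (F13 A1 (A2 + mat 1) (B1 + mat 1) B2 (C1 + mat 1)) (matrix_inv C1))) m1 m2 m3
       = (s * real m3) *\<^sub>R X"
  proof (cases m3)
    case 0 then show ?thesis by (simp add: mulx3_def)
  next
    case (Suc b)
    have j: "j = m2 + b" using Suc \<open>m2 + m3 = Suc j\<close> by simp
    have sc: "inverse (fact m1 * fact m2 * fact b :: real) = s * real m3"
    proof -
      have "fact (Suc b) = real (Suc b) * (fact b :: real)" by simp
      moreover have "(fact m1 :: real) \<noteq> 0" "(fact m2 :: real) \<noteq> 0" "(fact b :: real) \<noteq> 0" by auto
      ultimately show ?thesis unfolding s_def Suc by (simp only:) (simp add: field_simps del: of_nat_Suc)
    qed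
    have iT: "invertible (mpoch (C1 + mat 1) (m1 + m2 + b))" by (rule inv_mpoch[OF hC'])
    have cP: "B1 ** mpoch A1 m1 = mpoch A1 m1 ** B1"
      using comm_mpoch[of B1 A1 m1] hA1B1 by simp
    have cA: "B1 ** (A2 + mat 1) = (A2 + mat 1) ** B1"
      using comm_shift[of B1 A2 1] hA2B1 by simp
    have cQ: "B1 ** mpoch (A2 + mat 1) (m2 + b) = mpoch (A2 + mat 1) (m2 + b) ** B1"
      by (rule comm_mpoch[OF cA])
    have eR: "B1 ** mpoch (B1 + mat 1) (m1 + b) = R"
    proof -
      have "m1 + m3 = Suc (m1 + b)" using Suc by simp
      then show ?thesis unfolding R_def by (simp only: mpoch_shift)
    qed
    have eT: "matrix_inv (mpoch (C1 + mat 1) (m1 + m2 + b)) ** matrix_inv C1 = T"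
    proof -
      have "m1 + m2 + m3 = Suc (m1 + m2 + b)" using Suc by simp
      then show ?thesis unfolding T_def by (simp only: mpoch_shift inv_mult[OF iC iT])
    qed
    have "mulx3 (lmul B1 (rmul (F13 A1 (A2 + mat 1) (B1 + mat 1) B2 (C1 + mat 1)) (matrix_inv C1))) m1 m2 m3
       = B1 ** ((inverse (fact m1 * fact m2 * fact b :: real) *\<^sub>R (mpoch A1 m1 ** mpoch (A2 + mat 1) (m2 + b) ** mpoch (B1 + mat 1) (m1 + b) ** S ** matrix_inv (mpoch (C1 + mat 1) (m1 + m2 + b)))) ** matrix_inv C1)"
      by (simp add: mulx3_def lmul_def rmul_def F13_def Suc S_def add.assoc del: mpoch.simps)
    also have "\<dots> = inverse (fact m1 * fact m2 * fact b :: real) *\<^sub>R (mpoch A1 m1 ** mpoch (A2 + mat 1) (m2 + b) ** (B1 ** mpoch (B1 + mat 1) (m1 + b)) ** S ** (matrix_inv (mpoch (C1 + mat 1) (m1 + m2 + b)) ** matrix_inv C1))"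
      by (simp only: mm_scaleR_left mm_scaleR_right regroup3[OF cP cQ])
    also have "\<dots> = (s * real m3) *\<^sub>R X" by (simp only: eR eT sc X_def P_def Q_def j)
    finally show ?thesis .
  qed
  show ?thesis
    by (simp add: lhs t2 t3 distrib_left scaleR_add_left add.assoc)
qed

lemma sum_rmul: "(\<Sum>i\<in>S. f i) ** (M::'n::finite cmat) = (\<Sum>i\<in>S. f i ** M)"
  by (induction S rule: infinite_finite_induct) (simp_all add: mm_rdistrib)

lemma sum_lmul: "(M::'n::finite cmat) ** (\<Sum>i\<in>S. f i) = (\<Sum>i\<in>S. M ** f i)"
  by (induction S rule: infinite_finite_induct) (simp_all add: matrix_add_ldistrib)

lemma mulx2_sum: "mulx2 (rmul (\<lambda>m1 m2 m3. \<Sum>n1\<in>S. f n1 m1 m2 m3) M) m1 m2 m3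
   = (\<Sum>n1\<in>S. mulx2 (rmul (f n1) M) m1 m2 m3)"
  by (cases m2) (simp_all add: mulx2_def rmul_def sum_rmul)

lemma mulx3_sum: "mulx3 (lmul B (rmul (\<lambda>m1 m2 m3. \<Sum>n1\<in>S. f n1 m1 m2 m3) M)) m1 m2 m3
   = (\<Sum>n1\<in>S. mulx3 (lmul B (rmul (f n1) M)) m1 m2 m3)"
  by (cases m3) (simp_all add: mulx3_def lmul_def rmul_def sum_rmul sum_lmul)

lemma comm_A2: assumes "(A2::'n::finite cmat) ** B1 = B1 ** A2"
  shows "(A2 + r *\<^sub>R mat 1) ** B1 = B1 ** (A2 + r *\<^sub>R mat 1)"
  using comm_shift[of B1 A2 r] assms by simp

lemma part1:
  fixes A1 A2 B1 B2 C1 :: "'n::finite cmat"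
  assumes hC: "\<And>m::nat. invertible (C1 + real m *\<^sub>R mat 1)"
    and hA1B1: "A1 ** B1 = B1 ** A1"
    and hA2B1: "A2 ** B1 = B1 ** A2"
    and hC1B2: "C1 ** B2 = B2 ** C1"
  shows "F13 A1 (A2 + real n *\<^sub>R mat 1) B1 B2 C1 m1 m2 m3 = F13 A1 A2 B1 B2 C1 m1 m2 m3
     + (\<Sum>n1=1..n. mulx2 (rmul (F13 A1 (A2 + real n1 *\<^sub>R mat 1) B1 (B2 + mat 1) (C1 + mat 1)) (B2 ** matrix_inv C1)) m1 m2 m3
     + mulx3 (lmul B1 (rmul (F13 A1 (A2 + real n1 *\<^sub>R mat 1) (B1 + mat 1) B2 (C1 + mat 1)) (matrix_inv C1))) m1 m2 m3)"
proof (induction n)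
  case 0 show ?case by simp
next
  case (Suc n)
  have e: "A2 + real n *\<^sub>R mat 1 + mat 1 = A2 + real (Suc n) *\<^sub>R mat 1" by (simp add: algebra_simps)
  show ?case
    using step[OF hC hA1B1 comm_A2[OF hA2B1, of "real n"] hC1B2, of m1 m2 m3] Suc
    by (simp add: e algebra_simps)
qed

lemma part2:
  fixes A1 A2 B1 B2 C1 :: "'n::finite cmat"
  assumes hC: "\<And>m::nat. invertible (C1 + real m *\<^sub>R mat 1)"
    and hA1B1: "A1 ** B1 = B1 ** A1"
    and hA2B1: "A2 ** B1 = B1 ** A2"
    and hC1B2: "C1 ** B2 = B2 ** C1"
  shows "F13 A1 (A2 - real n *\<^sub>R mat 1) B1 B2 C1 m1 m2 m3 = F13 A1 A2 B1 B2 C1 m1 m2 m3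
     - (\<Sum>n1<n. mulx2 (rmul (F13 A1 (A2 - real n1 *\<^sub>R mat 1) B1 (B2 + mat 1) (C1 + mat 1)) (B2 ** matrix_inv C1)) m1 m2 m3
     + mulx3 (lmul B1 (rmul (F13 A1 (A2 - real n1 *\<^sub>R mat 1) (B1 + mat 1) B2 (C1 + mat 1)) (matrix_inv C1))) m1 m2 m3)"
proof (induction n)
  case 0 show ?case by simp
next
  case (Suc n)
  have e: "A2 + (- real (Suc n)) *\<^sub>R mat 1 + mat 1 = A2 - real n *\<^sub>R mat 1"
    "A2 + (- real (Suc n)) *\<^sub>R mat 1 = A2 - real (Suc n) *\<^sub>R mat 1" by (simp_all add: algebra_simps)
  show ?case
    using step[OF hC hA1B1 comm_A2[OF hA2B1, of "- real (Suc n)"] hC1B2, of m1 m2 m3] Suc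
    unfolding e by (simp add: algebra_simps)
qed

theorem mainTheorem18:
  fixes A1 A2 B1 B2 C1 :: "'n::finite cmat" and n :: nat
  assumes hC: "\<And>m::nat. invertible (C1 + real m *\<^sub>R mat 1)"
    and hA1B1: "A1 ** B1 = B1 ** A1"
    and hA2B1: "A2 ** B1 = B1 ** A2"
    and hC1B2: "C1 ** B2 = B2 ** C1"
    and hn: "n \<ge> 1"
    and hA2: "\<And>m::nat. invertible (A2 + real m *\<^sub>R mat 1)"
  shows
   "F13 A1 (A2 + real n *\<^sub>R mat 1) B1 B2 C1 =
      sadd (sadd (F13 A1 A2 B1 B2 C1)
      (mulx2 (rmul (\<lambda>m1 m2 m3. \<Sum>n1 = 1..n.
            F13 A1 (A2 + real n1 *\<^sub>R mat 1) B1 (B2 + mat 1) (C1 + mat 1) m1 m2 m3)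
          (B2 ** matrix_inv C1))))
      (mulx3 (lmul B1 (rmul (\<lambda>m1 m2 m3. \<Sum>n1 = 1..n.
            F13 A1 (A2 + real n1 *\<^sub>R mat 1) (B1 + mat 1) B2 (C1 + mat 1) m1 m2 m3)
          (matrix_inv C1))))
   \<and>
   ((\<forall>n1\<le>n. invertible (A2 - real n1 *\<^sub>R mat 1)) \<longrightarrow>
    F13 A1 (A2 - real n *\<^sub>R mat 1) B1 B2 C1 =
      ssub (ssub (F13 A1 A2 B1 B2 C1)
      (mulx2 (rmul (\<lambda>m1 m2 m3. \<Sum>n1 = 0..n - 1.
            F13 A1 (A2 - real n1 *\<^sub>R mat 1) B1 (B2 + mat 1) (C1 + mat 1) m1 m2 m3)
          (B2 ** matrix_inv C1))))
      (mulx3 (lmul B1 (rmul (\<lambda>m1 m2 m3. \<Sum>n1 = 0..n - 1.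
            F13 A1 (A2 - real n1 *\<^sub>R mat 1) (B1 + mat 1) B2 (C1 + mat 1) m1 m2 m3)
          (matrix_inv C1)))))"
proof
  show "F13 A1 (A2 + real n *\<^sub>R mat 1) B1 B2 C1 =
      sadd (sadd (F13 A1 A2 B1 B2 C1)
      (mulx2 (rmul (\<lambda>m1 m2 m3. \<Sum>n1 = 1..n.
            F13 A1 (A2 + real n1 *\<^sub>R mat 1) B1 (B2 + mat 1) (C1 + mat 1) m1 m2 m3)
          (B2 ** matrix_inv C1))))
      (mulx3 (lmul B1 (rmul (\<lambda>m1 m2 m3. \<Sum>n1 = 1..n.
            F13 A1 (A2 + real n1 *\<^sub>R mat 1) (B1 + mat 1) B2 (C1 + mat 1) m1 m2 m3)
          (matrix_inv C1))))"
    by (intro ext, simp only: sadd_def mulx2_sum mulx3_sum part1[OF hC hA1B1 hA2B1 hC1B2] sum.distrib add.assoc)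
next
  have iv: "{0..n - 1} = {..<n}" using hn by auto
  show "(\<forall>n1\<le>n. invertible (A2 - real n1 *\<^sub>R mat 1)) \<longrightarrow>
    F13 A1 (A2 - real n *\<^sub>R mat 1) B1 B2 C1 =
      ssub (ssub (F13 A1 A2 B1 B2 C1)
      (mulx2 (rmul (\<lambda>m1 m2 m3. \<Sum>n1 = 0..n - 1.
            F13 A1 (A2 - real n1 *\<^sub>R mat 1) B1 (B2 + mat 1) (C1 + mat 1) m1 m2 m3)
          (B2 ** matrix_inv C1))))
      (mulx3 (lmul B1 (rmul (\<lambda>m1 m2 m3. \<Sum>n1 = 0..n - 1.
            F13 A1 (A2 - real n1 *\<^sub>R mat 1) (B1 + mat 1) B2 (C1 + mat 1) m1 m2 m3)
          (matrix_inv C1))))"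
    by (intro impI ext, simp only: iv ssub_def mulx2_sum mulx3_sum part2[OF hC hA1B1 hA2B1 hC1B2] sum.distrib diff_diff_eq)
qed

end
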